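(* Let $q\in X^*\setminus\{e\}$ and let $\lambda_q$ be the largest positive real root of $\mathfrak{p}_q(t):=t^{|q|}-\sum_{v\in\sqrt[*]{P_q}}t^{|q|-|v|}$. There is a constant $c>0$ depending only on $q$ such that every $\xi\in X^\omega$ that is quasiperiodic with quasiperiod $q$ satisfies $f(\xi,n)\le c\cdot\lambda_q^n$ for all $n\in\mathbb{N}$.
   Context: $X$ is a finite alphabet with $|X|\ge2$; $X^*$ the finite words (empty word $e$), $X^\omega$ the infinite words, $X^n$ the words of length $n$. $w\sqsubseteq\eta$ means $w$ is a prefix of $\eta$, $w\sqsubset\eta$ a proper prefix. An $\omega$-word $\xi$ is quasiperiodic with quasiperiod $q$ if for every $j\in\mathbb{N}$ there is a prefix $u_j\sqsubseteq\xi$ with $j-|q|<|u_j|\le j$ and $u_j\cdot q\sqsubseteq\xi$. $f(\xi,n):=|\mathrm{infix}(\xi)\cap X^n|$ is the number of distinct factors (subwords) of $\xi$ of length $n$. $P_q:=\{v: e\sqsubset v\sqsubseteq q\sqsubset v\cdot q\}$, and $\sqrt[*]{P_q}:=P_q\setminus(P_q^2\cdot P_q^* )$ (elements of $P_q$ not a concatenation of two or more elements of $P_q$). *)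

theory Defs
  imports Complex_Main "HOL-Library.Sublist" "HOL-Library.Cardinality"
begin

definition oprefix :: "'a list \<Rightarrow> (nat \<Rightarrow> 'a) \<Rightarrow> bool" where
  "oprefix w \<xi> \<longleftrightarrow> (\<forall>i < length w. w ! i = \<xi> i)"

definition quasiperiodic :: "(nat \<Rightarrow> 'a) \<Rightarrow> 'a list \<Rightarrow> bool" where
  "quasiperiodic \<xi> q \<longleftrightarrow>
     (\<forall>j::nat. \<exists>u. oprefix u \<xi> \<and> int j - int (length q) < int (length u)
                 \<and> length u \<le> j \<and> oprefix (u @ q) \<xi>)"

definition infixes :: "(nat \<Rightarrow> 'a) \<Rightarrow> 'a list set" where
  "infixes \<xi> = {map \<xi> [i..<i+n] | i n. True}"

definition subword_complexity :: "(nat \<Rightarrow> 'a) \<Rightarrow> nat \<Rightarrow> nat" where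
  "subword_complexity \<xi> n = card (infixes \<xi> \<inter> {w. length w = n})"

definition Pq :: "'a list \<Rightarrow> 'a list set" where
  "Pq q = {v. v \<noteq> [] \<and> prefix v q \<and> strict_prefix q (v @ q)}"

definition star_root :: "'a list set \<Rightarrow> 'a list set" where
  "star_root P = P - {concat ws | ws. length ws \<ge> 2 \<and> set ws \<subseteq> P}"

definition char_poly :: "'a list \<Rightarrow> real \<Rightarrow> real" where
  "char_poly q t = t ^ length q - (\<Sum>v\<in>star_root (Pq q). t ^ (length q - length v))"

definition lambda_q :: "'a list \<Rightarrow> real" where
  "lambda_q q = Max {t. t > 0 \<and> char_poly q t = 0}"

end

theory Submission
  imports Defs
begin

definition Sset :: "'a list set \<Rightarrow> nat \<Rightarrow> 'a list set" where
  "Sset R n = {w. length w = n \<and> (\<exists>ws. set ws \<subseteq> R \<and> prefix w (concat ws))}"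

lemma Sset_finite: "finite (Sset (R::'a::finite list set) n)"
proof -
  have "Sset R n \<subseteq> {xs. set xs \<subseteq> UNIV \<and> length xs = n}" by (auto simp: Sset_def)
  moreover have "finite {xs::'a list. set xs \<subseteq> UNIV \<and> length xs = n}"
    by (rule finite_lists_length_eq) simp
  ultimately show ?thesis by (rule finite_subset)
qed

lemma Sset_sub:
  assumes "n > 0"
  shows "Sset R n \<subseteq> (\<Union>r\<in>{r\<in>R. length r \<le> n}. (\<lambda>w. r @ w) ` Sset R (n - length r))
          \<union> (take n) ` {r\<in>R. n < length r}"
proof
  fix w assume "w \<in> Sset R n"
  then obtain ws where w: "length w = n" "set ws \<subseteq> R" "prefix w (concat ws)" by (auto simp: Sset_def)
  then obtain r rest where ws: "ws = r # rest" using assms by (cases ws) auto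
  have rR: "r \<in> R" "set rest \<subseteq> R" using w ws by auto
  have pa: "prefix w r \<or> (\<exists>us. w = r @ us \<and> prefix us (concat rest))"
    using w(3) ws by (simp add: prefix_append)
  show "w \<in> (\<Union>r\<in>{r\<in>R. length r \<le> n}. (\<lambda>w. r @ w) ` Sset R (n - length r))
          \<union> (take n) ` {r\<in>R. n < length r}"
  proof (cases "length r \<le> n")
    case True
    from pa show ?thesis
    proof
      assume "prefix w r"
      then have "w = r" using True w(1)
        by (metis prefix_length_le prefix_length_prefix prefix_order.antisym prefix_order.refl le_antisym)
      moreover have "[] \<in> Sset R (n - length r)" using True w(1) \<open>w = r\<close>
        by (auto simp: Sset_def intro: exI[of _ "[]"])
      ultimately show ?thesis using rR True by force
    next
      assume "\<exists>us. w = r @ us \<and> prefix us (concat rest)"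
      then obtain us where us: "w = r @ us" "prefix us (concat rest)" by blast
      have "us \<in> Sset R (n - length r)" using us w(1) rR by (auto simp: Sset_def)
      then show ?thesis using us rR True by force
    qed
  next
    case False
    with pa w(1) have "prefix w r" by auto
    then have "w = take n r" using w(1) by (auto simp: prefix_def)
    then show ?thesis using rR False by force
  qed
qed

lemma Sset_card:
  fixes R :: "'a::finite list set" and lam :: real
  assumes fin: "finite R" and ne: "\<forall>r\<in>R. r \<noteq> [] \<and> length r \<le> L"
    and lam1: "lam \<ge> 1" and eq: "(\<Sum>r\<in>R. lam ^ (L - length r)) = lam ^ L"
  shows "real (card (Sset R n)) \<le> lam ^ (n + L)"
proof (induction n rule: less_induct)
  case (less n)
  show ?case
  proof (cases "n = 0")
    case True
    have "Sset R 0 \<subseteq> {[]}" by (auto simp: Sset_def)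
    then have "card (Sset R 0) \<le> card {[]::'a list}" by (intro card_mono) auto
    then have "card (Sset R 0) \<le> 1" by simp
    moreover have "1 \<le> lam ^ (0 + L)" using lam1 by simp
    ultimately show ?thesis using True by simp
  next
    case False
    let ?A = "{r\<in>R. length r \<le> n}" and ?B = "{r\<in>R. n < length r}"
    have finA: "finite ?A" "finite ?B" using fin by auto
    have "card (Sset R n) \<le> card ((\<Union>r\<in>?A. (\<lambda>w. r @ w) ` Sset R (n - length r)) \<union> (take n) ` ?B)"
      by (rule card_mono) (use Sset_sub[of n R] False in \<open>auto intro!: finite_UN_I finA Sset_finite\<close>)
    also have "\<dots> \<le> card (\<Union>r\<in>?A. (\<lambda>w. r @ w) ` Sset R (n - length r)) + card ((take n) ` ?B)"
      by (rule card_Un_le)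
    also have "\<dots> \<le> (\<Sum>r\<in>?A. card ((\<lambda>w. r @ w) ` Sset R (n - length r))) + card ?B"
      by (intro add_mono card_UN_le card_image_le finA)
    also have "\<dots> \<le> (\<Sum>r\<in>?A. card (Sset R (n - length r))) + card ?B"
      by (intro add_mono sum_mono card_image_le Sset_finite) simp
    finally have c0: "card (Sset R n) \<le> (\<Sum>r\<in>?A. card (Sset R (n - length r))) + card ?B" .
    have c: "real (card (Sset R n)) \<le> (\<Sum>r\<in>?A. real (card (Sset R (n - length r)))) + real (card ?B)"
      using of_nat_mono[OF c0, where 'a=real] by (simp add: of_nat_sum)
    have s1: "(\<Sum>r\<in>?A. real (card (Sset R (n - length r)))) \<le> (\<Sum>r\<in>?A. lam ^ (n + L - length r))"
    proof (rule sum_mono)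
      fix r assume r: "r \<in> ?A"
      then have "n - length r < n" using ne False by fastforce
      then have "real (card (Sset R (n - length r))) \<le> lam ^ (n - length r + L)" by (rule less.IH)
      moreover have "n - length r + L = n + L - length r" using r by auto
      ultimately show "real (card (Sset R (n - length r))) \<le> lam ^ (n + L - length r)" by simp
    qed
    have s2: "real (card ?B) \<le> (\<Sum>r\<in>?B. lam ^ (n + L - length r))"
    proof -
      have "real (card ?B) = (\<Sum>r\<in>?B. 1)" by simp
      also have "\<dots> \<le> (\<Sum>r\<in>?B. lam ^ (n + L - length r))"
        by (rule sum_mono) (use lam1 in auto)
      finally show ?thesis .
    qed
    have "(\<Sum>r\<in>?A. lam ^ (n + L - length r)) + (\<Sum>r\<in>?B. lam ^ (n + L - length r))
        = (\<Sum>r\<in>R. lam ^ (n + L - length r))"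
      by (subst sum.union_disjoint[symmetric]) (use fin in \<open>auto intro: sum.cong\<close>)
    also have "\<dots> = (\<Sum>r\<in>R. lam ^ n * lam ^ (L - length r))"
      by (rule sum.cong) (use ne in \<open>auto simp: power_add[symmetric]\<close>)
    also have "\<dots> = lam ^ n * lam ^ L" by (simp add: sum_distrib_left[symmetric] eq)
    also have "\<dots> = lam ^ (n + L)" by (simp add: power_add)
    finally show ?thesis using c s1 s2 by linarith
  qed
qed

lemma concat_choose:
  "(\<forall>w\<in>set ws. \<exists>xs. set xs \<subseteq> R \<and> concat xs = w) \<Longrightarrow> \<exists>xs. set xs \<subseteq> R \<and> concat xs = concat ws"
proof (induction ws)
  case Nil then show ?case by (intro exI[of _ "[]"]) simp
next
  case (Cons a ws)
  then obtain xs ys where "set xs \<subseteq> R" "concat xs = a" "set ys \<subseteq> R" "concat ys = concat ws" by auto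
  then show ?case by (intro exI[of _ "xs @ ys"]) auto
qed

lemma Pq_decomp:
  "v \<in> Pq q \<Longrightarrow> \<exists>ws. set ws \<subseteq> star_root (Pq q) \<and> concat ws = v"
proof (induction "length v" arbitrary: v rule: less_induct)
  case less
  show ?case
  proof (cases "v \<in> star_root (Pq q)")
    case True then show ?thesis by (intro exI[of _ "[v]"]) auto
  next
    case False
    then obtain ws where ws: "length ws \<ge> 2" "set ws \<subseteq> Pq q" "concat ws = v"
      using less.prems by (auto simp: star_root_def)
    have "\<forall>w\<in>set ws. \<exists>xs. set xs \<subseteq> star_root (Pq q) \<and> concat xs = w"
    proof
      fix w assume w: "w \<in> set ws"
      then obtain xs ys where sp: "ws = xs @ w # ys" by (meson split_list)
      with ws(1) have "xs @ ys \<noteq> []" by auto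
      then obtain z where z: "z \<in> set (xs @ ys)" by (metis ex_in_conv set_empty)
      hence "z \<in> Pq q" using ws(2) sp by auto
      hence "z \<noteq> []" by (simp add: Pq_def)
      have "length z \<le> sum_list (map length (xs @ ys))"
        using z by (intro member_le_sum_list) auto
      hence "length z \<le> length (concat xs) + length (concat ys)"
        by (simp add: length_concat)
      moreover have "v = concat xs @ w @ concat ys" using ws(3) sp by simp
      then have "length v = length (concat xs) + length w + length (concat ys)" by simp
      moreover have "length z > 0" using \<open>z \<noteq> []\<close> by simp
      ultimately have "length w < length v" by linarith
      moreover have "w \<in> Pq q" using w ws(2) by auto
      ultimately show "\<exists>xs. set xs \<subseteq> star_root (Pq q) \<and> concat xs = w" using less.hyps by blast
    qed
    then show ?thesis using concat_choose ws(3) by blast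
  qed
qed


lemma occ:
  assumes "quasiperiodic \<xi> q"
  shows "\<exists>p\<le>i. i < p + length q \<and> map \<xi> [p..<p + length q] = q"
proof -
  obtain u where u: "oprefix u \<xi>" "int i - int (length q) < int (length u)" "length u \<le> i" "oprefix (u @ q) \<xi>"
    using assms unfolding quasiperiodic_def by blast
  have "map \<xi> [length u..<length u + length q] = q"
  proof (rule nth_equalityI)
    show "length (map \<xi> [length u..<length u + length q]) = length q" by simp
    fix k assume "k < length (map \<xi> [length u..<length u + length q])"
    then have k: "k < length q" by simp
    have "length u + k < length (u @ q)" using k by simp
    then have "(u @ q) ! (length u + k) = \<xi> (length u + k)" using u(4) unfolding oprefix_def by blast
    then show "map \<xi> [length u..<length u + length q] ! k = q ! k" using k by (simp add: nth_append)
  qed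
  then show ?thesis using u(2,3) by (intro exI[of _ "length u"]) auto
qed

lemma seg_S:
  assumes qp: "quasiperiodic \<xi> q"
  shows "map \<xi> [p..<p + length q] = q \<Longrightarrow> map \<xi> [p..<p+m] \<in> Sset (star_root (Pq q)) m"
proof (induction m arbitrary: p rule: less_induct)
  case (less m)
  define L where "L = length q"
  have qL: "map \<xi> [p..<p + L] = q" using less.prems by (simp add: L_def)
  obtain p' where p': "p' \<le> p + L" "p + L < p' + L" "map \<xi> [p'..<p' + L] = q"
    using occ[OF qp, of "p + L"] unfolding L_def by blast
  define d where "d = p' - p"
  have d: "0 < d" "d \<le> L" "p' = p + d" using p' by (auto simp: d_def)
  define v where "v = map \<xi> [p..<p+d]"
  have "take d (map \<xi> [p..<p + L]) = v" unfolding v_def using d by (simp add: take_map)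
  then have vq: "take d q = v" using qL by simp
  have "v @ q = v @ map \<xi> [p + d..<p + d + L]" using p'(3) d(3) by simp
  also have "\<dots> = map \<xi> [p..<p + d + L]" unfolding v_def
    by (simp add: upt_add_eq_append[of p "p+d" L])
  finally have vqa: "v @ q = map \<xi> [p..<p + d + L]" .
  have "take L (v @ q) = map \<xi> [p..<p + L]" unfolding vqa by (simp add: take_map)
  then have "take L (v @ q) = q" using qL by simp
  then have "prefix q (v @ q)" by (metis take_is_prefix)
  moreover have "q \<noteq> v @ q" using d(1) by (simp add: v_def)
  ultimately have "strict_prefix q (v @ q)" by (simp add: strict_prefix_def)
  moreover have "prefix v q" using vq by (metis take_is_prefix)
  moreover have "v \<noteq> []" using d(1) by (simp add: v_def)
  ultimately have vP: "v \<in> Pq q" by (simp add: Pq_def)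
  obtain vs where vs: "set vs \<subseteq> star_root (Pq q)" "concat vs = v" using Pq_decomp[OF vP] by blast
  show ?case
  proof (cases "m < d")
    case True
    have "map \<xi> [p..<p+m] = take m v" unfolding v_def using True by (simp add: take_map)
    then have "prefix (map \<xi> [p..<p+m]) (concat vs)" using vs(2) by (metis take_is_prefix)
    then show ?thesis using vs(1) by (auto simp: Sset_def)
  next
    case False
    then have "m - d < m" using d(1) by simp
    then have "map \<xi> [p'..<p'+(m-d)] \<in> Sset (star_root (Pq q)) (m - d)"
      using p'(3) less.IH unfolding L_def by blast
    then obtain ws where ws: "set ws \<subseteq> star_root (Pq q)" "prefix (map \<xi> [p'..<p'+(m-d)]) (concat ws)"
      by (auto simp: Sset_def)
    have "map \<xi> [p..<p+m] = v @ map \<xi> [p'..<p'+(m-d)]"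
      unfolding v_def using False d(3) upt_add_eq_append[of p "p+d" "m-d"] by simp
    then have "prefix (map \<xi> [p..<p+m]) (concat (vs @ ws))" using ws(2) vs(2) by simp
    then show ?thesis using vs(1) ws(1) by (auto simp: Sset_def intro!: exI[of _ "vs @ ws"])
  qed
qed


lemma root_props:
  fixes q :: "'a list"
  assumes q: "q \<noteq> []"
  defines "R \<equiv> star_root (Pq q)" and "L \<equiv> length q"
  shows "finite R" "R \<noteq> {}" "\<forall>r\<in>R. r \<noteq> [] \<and> length r \<le> L"
proof -
  have "R \<subseteq> set (prefixes q)" by (auto simp: R_def star_root_def Pq_def)
  then show "finite R" by (rule finite_subset) simp
  show "\<forall>r\<in>R. r \<noteq> [] \<and> length r \<le> L"
    by (auto simp: R_def L_def star_root_def Pq_def prefix_length_le)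
  have "q \<in> Pq q" using q by (auto simp: Pq_def strict_prefix_def)
  then obtain ws where "set ws \<subseteq> R" "concat ws = q" using Pq_decomp unfolding R_def by blast
  then show "R \<noteq> {}" using q by (cases ws) auto
qed

lemma lambda_props:
  fixes q :: "'a list"
  assumes q: "q \<noteq> []"
  defines "R \<equiv> star_root (Pq q)" and "L \<equiv> length q"
  shows "lambda_q q \<ge> 1 \<and> (\<Sum>r\<in>R. lambda_q q ^ (L - length r)) = lambda_q q ^ L"
proof -
  note rp = root_props[OF q, folded R_def L_def]
  have L1: "L \<ge> 1" using q by (simp add: L_def Suc_le_eq)
  have cp: "char_poly q t = t ^ L - (\<Sum>r\<in>R. t ^ (L - length r))" for t
    by (simp add: char_poly_def R_def L_def)
  define N where "N = real (card R) + 1"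
  have N1: "N \<ge> 1" by (simp add: N_def)
  have f1: "char_poly q 1 \<le> 0"
  proof -
    have "card R \<ge> 1" using rp(1,2) by (simp add: Suc_le_eq card_gt_0_iff)
    then show ?thesis unfolding cp by simp
  qed
  have fN: "0 \<le> char_poly q N"
  proof -
    have "(\<Sum>r\<in>R. N ^ (L - length r)) \<le> (\<Sum>r\<in>R. N ^ (L - 1))"
    proof (rule sum_mono, rule power_increasing)
      fix r assume "r \<in> R"
      then have "length r \<ge> 1" using rp(3) by (cases r) auto
      then show "L - length r \<le> L - 1" by (rule diff_le_mono2)
    qed (use N1 in auto)
    also have "\<dots> = real (card R) * N ^ (L - 1)" by simp
    also have "\<dots> \<le> N * N ^ (L - 1)" using N1 by (intro mult_right_mono) (auto simp: N_def)
    also have "\<dots> = N ^ L"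
    proof -
      have "Suc (L - 1) = L" using L1 by simp
      then show ?thesis by (metis power_Suc)
    qed
    finally show ?thesis unfolding cp by simp
  qed
  have "\<forall>x. 1 \<le> x \<and> x \<le> N \<longrightarrow> isCont (char_poly q) x"
    unfolding char_poly_def[abs_def] by (auto intro!: continuous_intros)
  then obtain t where t: "t \<ge> 1" "t \<le> N" "char_poly q t = 0"
    using IVT[of "char_poly q" 1 0 N] f1 fN N1 by blast
  have G: "(\<Sum>r\<in>R. (1 / x) ^ length r) = 1" if "x > 0" "char_poly q x = 0" for x
  proof -
    have "(\<Sum>r\<in>R. x ^ (L - length r)) = (\<Sum>r\<in>R. x ^ L * (1/x) ^ length r)"
      by (rule sum.cong) (use rp(3) that(1) in \<open>auto simp: power_diff power_one_over\<close>)
    also have "\<dots> = x ^ L * (\<Sum>r\<in>R. (1/x) ^ length r)" by (simp add: sum_distrib_left)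
    finally have "x ^ L * (\<Sum>r\<in>R. (1/x) ^ length r) = x ^ L" using that(2) unfolding cp by simp
    then show ?thesis using that(1) by simp
  qed
  have less: False if "0 < x" "x < y" "char_poly q x = 0" "char_poly q y = 0" for x y
  proof -
    have "(\<Sum>r\<in>R. (1 / y) ^ length r) < (\<Sum>r\<in>R. (1 / x) ^ length r)"
    proof (rule sum_strict_mono[OF rp(1) rp(2)])
      fix r assume "r \<in> R"
      then have "length r \<noteq> 0" using rp(3) by auto
      moreover have "1 / y < 1 / x" using that by (simp add: frac_less2)
      moreover have "0 \<le> 1 / y" using that by simp
      ultimately show "(1 / y) ^ length r < (1 / x) ^ length r" by (simp add: power_strict_mono)
    qed
    then show False using G[OF that(1,3)] G[of y] that by simp
  qed
  have "{x. x > 0 \<and> char_poly q x = 0} = {t}"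
  proof safe
    fix x assume x: "x > 0" "char_poly q x = 0"
    show "x = t"
    proof (rule ccontr)
      assume "x \<noteq> t"
      then show False using less[OF x(1) _ x(2) t(3)] less[of t x] t x by (cases "x < t") auto
    qed
  qed (use t in auto)
  then have "lambda_q q = t" by (simp add: lambda_q_def)
  moreover have "(\<Sum>r\<in>R. t ^ (L - length r)) = t ^ L" using t(3) unfolding cp by simp
  ultimately show ?thesis using t(1) by simp
qed

theorem lemma6:
  fixes q :: "'a::finite list"
  assumes "CARD('a) \<ge> 2"
    and "q \<noteq> []"
  shows "\<exists>c>0. \<forall>\<xi> :: nat \<Rightarrow> 'a. quasiperiodic \<xi> q \<longrightarrow>
           (\<forall>n. real (subword_complexity \<xi> n) \<le> c * lambda_q q ^ n)"
proof -
  define R where "R = star_root (Pq q)"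
  define L where "L = length q"
  define lam where "lam = lambda_q q"
  note rp = root_props[OF assms(2), folded R_def L_def]
  note lp = lambda_props[OF assms(2), folded R_def L_def lam_def]
  have L1: "L \<ge> 1" using assms(2) by (simp add: L_def Suc_le_eq)
  have Sb: "real (card (Sset R m)) \<le> lam ^ (m + L)" for m
    using Sset_card[OF rp(1) rp(3)] lp by blast
  have "real L * lam ^ (2 * L) > 0" using L1 lp by simp
  moreover have "real (subword_complexity \<xi> n) \<le> real L * lam ^ (2 * L) * lam ^ n"
    if qp: "quasiperiodic \<xi> q" for \<xi> n
  proof -
    have sub: "infixes \<xi> \<inter> {w. length w = n} \<subseteq> (\<Union>k<L. drop k ` Sset R (n + k))"
    proof
      fix w assume "w \<in> infixes \<xi> \<inter> {w. length w = n}"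
      then obtain i where w: "w = map \<xi> [i..<i+n]" by (auto simp: infixes_def)
      obtain p where p: "p \<le> i" "i < p + L" "map \<xi> [p..<p + length q] = q"
        using occ[OF qp, of i] unfolding L_def by blast
      have "map \<xi> [p..<p + (n + (i - p))] \<in> Sset R (n + (i - p))"
        using seg_S[OF qp p(3)] unfolding R_def by blast
      moreover have "drop (i - p) (map \<xi> [p..<p + (n + (i - p))]) = w"
        using p(1) w by (simp add: drop_map add.commute)
      moreover have "i - p < L" using p by simp
      ultimately show "w \<in> (\<Union>k<L. drop k ` Sset R (n + k))" by force
    qed
    have "subword_complexity \<xi> n \<le> card (\<Union>k<L. drop k ` Sset R (n + k))"
      unfolding subword_complexity_def by (rule card_mono[OF _ sub]) (auto intro: Sset_finite)
    also have "\<dots> \<le> (\<Sum>k<L. card (drop k ` Sset R (n + k)))" by (rule card_UN_le) simp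
    also have "\<dots> \<le> (\<Sum>k<L. card (Sset R (n + k)))" by (intro sum_mono card_image_le Sset_finite)
    finally have c0: "subword_complexity \<xi> n \<le> (\<Sum>k<L. card (Sset R (n + k)))" .
    have "real (subword_complexity \<xi> n) \<le> (\<Sum>k<L. real (card (Sset R (n + k))))"
      using of_nat_mono[OF c0, where 'a=real] by (simp add: of_nat_sum)
    also have "\<dots> \<le> (\<Sum>k<L. lam ^ (n + 2 * L))"
    proof (rule sum_mono)
      fix k assume "k \<in> {..<L}"
      then have "n + k + L \<le> n + 2 * L" by simp
      then have "lam ^ (n + k + L) \<le> lam ^ (n + 2 * L)" using lp by (intro power_increasing) auto
      then show "real (card (Sset R (n + k))) \<le> lam ^ (n + 2 * L)" using Sb[of "n + k"] by linarith
    qed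
    also have "\<dots> = real L * lam ^ (2 * L) * lam ^ n" by (simp add: power_add mult_ac)
    finally show ?thesis .
  qed
  ultimately show ?thesis unfolding lam_def by blast
qed

end
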